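(* Let $k\ge1$ and $q=2^{-1/k}$. The finite source $\mathcal{A}_k=\{(i,j):0\le i,j<k\}$ with weights $w(i,j)=q^{i+j}$ is $4$-uniform, and it has an optimal binary prefix code (tree) $T$ of fringe thickness at most $2$.
   Context: A finite source with weights $p_1\ge p_2\ge\dots\ge p_N>0$, $N\ge 2$, is $\alpha$-uniform ($\alpha\ge1$) if $p_1/p_N\le\alpha$. A prefix code is optimal for a finite weighted source if it minimizes $\sum_i p_i\ell_i$ over all binary prefix codes, $\ell_i$ the codeword lengths. The fringe thickness of a finite tree is the maximum difference between the depths of any two of its leaves. *)

theory Defs
  imports Complex_Main "HOL-Library.Sublist"
begin

definition alpha_uniform :: "real \<Rightarrow> ('a \<Rightarrow> real) \<Rightarrow> 'a set \<Rightarrow> bool" where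
  "alpha_uniform \<alpha> w S \<longleftrightarrow> 1 \<le> \<alpha> \<and> finite S \<and> S \<noteq> {} \<and> (\<forall>x\<in>S. 0 < w x) \<and>
     Max (w ` S) / Min (w ` S) \<le> \<alpha>"

text \<open>A binary prefix code on S: codewords are bit strings, none a prefix of another
(this includes injectivity, since prefix is reflexive).\<close>
definition prefix_code :: "'a set \<Rightarrow> ('a \<Rightarrow> bool list) \<Rightarrow> bool" where
  "prefix_code S c \<longleftrightarrow> (\<forall>x\<in>S. \<forall>y\<in>S. x \<noteq> y \<longrightarrow> \<not> prefix (c x) (c y))"

definition code_cost :: "('a \<Rightarrow> real) \<Rightarrow> 'a set \<Rightarrow> ('a \<Rightarrow> bool list) \<Rightarrow> real" where
  "code_cost w S c = (\<Sum>x\<in>S. w x * real (length (c x)))"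

definition optimal_code :: "('a \<Rightarrow> real) \<Rightarrow> 'a set \<Rightarrow> ('a \<Rightarrow> bool list) \<Rightarrow> bool" where
  "optimal_code w S c \<longleftrightarrow> prefix_code S c \<and>
     (\<forall>c'. prefix_code S c' \<longrightarrow> code_cost w S c \<le> code_cost w S c')"

text \<open>Fringe thickness of the code tree: leaves are the codewords, the depth of a leaf is
the codeword length, so it is max minus min codeword length.\<close>
definition fringe_thickness :: "'a set \<Rightarrow> ('a \<Rightarrow> bool list) \<Rightarrow> nat" where
  "fringe_thickness S c = Max ((\<lambda>x. length (c x)) ` S) - Min ((\<lambda>x. length (c x)) ` S)"

end

theory Submission
  imports Defs "HOL-Library.FuncSet"
begin


definition ext :: "nat \<Rightarrow> bool list \<Rightarrow> bool list set" where
  "ext n u = {v. length v = n \<and> prefix u v}"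

lemma card_len: "card {t::bool list. length t = n} = 2^n"
  using card_lists_length_eq[of "UNIV::bool set" n] by simp

lemma finite_len: "finite {t::bool list. length t = n}"
  using finite_lists_length_eq[of "UNIV::bool set" n] by simp

lemma ext_eq: "length u \<le> n \<Longrightarrow> ext n u = (\<lambda>t. u @ t) ` {t. length t = n - length u}"
  unfolding ext_def prefix_def by auto

lemma card_ext: "length u \<le> n \<Longrightarrow> card (ext n u) = 2^(n - length u)"
  apply (simp add: ext_eq)
  apply (subst card_image)
   apply (simp add: inj_on_def)
  apply (simp add: card_len)
  done

lemma ext_sub: "ext n u \<subseteq> {t. length t = n}" unfolding ext_def by auto

lemma finite_ext: "finite (ext n u)" using finite_subset[OF ext_sub finite_len] .

lemma kraft1:
  assumes "finite S" "prefix_code S c" "\<forall>x\<in>S. length (c x) \<le> n"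
  shows "(\<Sum>x\<in>S. (2::nat)^(n - length (c x))) \<le> 2^n"
proof -
  have "(\<Sum>x\<in>S. (2::nat)^(n - length (c x))) = (\<Sum>x\<in>S. card (ext n (c x)))"
    using assms(3) by (simp add: card_ext)
  also have "\<dots> = card (\<Union>x\<in>S. ext n (c x))"
  proof (rule card_UN_disjoint[symmetric])
    show "finite S" by fact
    show "\<forall>i\<in>S. finite (ext n (c i))" by (simp add: finite_ext)
    show "\<forall>i\<in>S. \<forall>j\<in>S. i \<noteq> j \<longrightarrow> ext n (c i) \<inter> ext n (c j) = {}"
    proof (intro ballI impI)
      fix i j assume ij: "i \<in> S" "j \<in> S" "i \<noteq> j"
      show "ext n (c i) \<inter> ext n (c j) = {}"
      proof (rule ccontr)
        assume "ext n (c i) \<inter> ext n (c j) \<noteq> {}"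
        then obtain v where "prefix (c i) v" "prefix (c j) v" unfolding ext_def by auto
        then have "prefix (c i) (c j) \<or> prefix (c j) (c i)" using prefix_same_cases by blast
        then show False using assms(2) ij unfolding prefix_code_def by metis
      qed
    qed
  qed
  also have "\<dots> \<le> card {t::bool list. length t = n}"
    by (rule card_mono[OF finite_len]) (use ext_sub in blast)
  finally show ?thesis by (simp add: card_len)
qed

lemma kraft2:
  assumes "finite S"
  shows "(\<forall>x\<in>S. l x \<le> n) \<longrightarrow> (\<Sum>x\<in>S. (2::nat)^(n - l x)) \<le> 2^n \<longrightarrow>
         (\<exists>c. prefix_code S c \<and> (\<forall>x\<in>S. length (c x) = l x))"
  using assms
proof (induction S rule: finite_ranking_induct[where f = l])
  case empty
  then show ?case by (simp add: prefix_code_def)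
next
  case (insert x S)
  show ?case
  proof (cases "x \<in> S")
    case True
    then show ?thesis using insert by (simp add: insert_absorb)
  next
    case False
    show ?thesis
    proof (intro impI)
      assume le: "\<forall>y\<in>insert x S. l y \<le> n" and ks: "(\<Sum>y\<in>insert x S. (2::nat)^(n - l y)) \<le> 2^n"
      define L where "L = l x"
      have Ln: "L \<le> n" using le L_def by simp
      have ks2: "2^(n - L) + (\<Sum>y\<in>S. (2::nat)^(n - l y)) \<le> 2^n"
        using ks False insert.hyps(1) L_def by simp
      have "(\<Sum>y\<in>S. (2::nat)^(n - l y)) \<le> 2^n" using ks2 by simp
      then obtain c where c: "prefix_code S c" "\<forall>y\<in>S. length (c y) = l y"
        using insert.IH le by auto
      have lyL: "\<forall>y\<in>S. l y \<le> L" using insert.hyps(2) L_def by simp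
      have split: "\<And>y. y \<in> S \<Longrightarrow> (2::nat)^(n - l y) = 2^(n-L) * 2^(L - l y)"
      proof -
        fix y assume "y \<in> S"
        then have "l y \<le> L" using lyL by simp
        then have "n - l y = (n - L) + (L - l y)" using Ln by simp
        then show "(2::nat)^(n - l y) = 2^(n-L) * 2^(L - l y)" by (simp add: power_add)
      qed
      have "2^(n-L) * (\<Sum>y\<in>S. (2::nat)^(L - l y)) = (\<Sum>y\<in>S. (2::nat)^(n - l y))"
        by (simp add: sum_distrib_left split)
      also have "\<dots> \<le> 2^n - 2^(n-L)" using ks2 by simp
      also have "\<dots> = 2^(n-L) * (2^L - 1)"
        using Ln by (simp add: diff_mult_distrib2 power_add[symmetric])
      finally have "(\<Sum>y\<in>S. (2::nat)^(L - l y)) \<le> 2^L - 1" by simp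
      then have sumlt: "(\<Sum>y\<in>S. (2::nat)^(L - l y)) < 2^L"
        by (metis diff_less le_less_trans less_numeral_extra(1) pos2 zero_less_power)
      define Bad where "Bad = (\<Union>y\<in>S. ext L (c y))"
      have "card Bad \<le> (\<Sum>y\<in>S. card (ext L (c y)))" unfolding Bad_def by (rule card_UN_le[OF insert.hyps(1)])
      also have "\<dots> = (\<Sum>y\<in>S. (2::nat)^(L - l y))"
        using c(2) lyL by (intro sum.cong) (auto simp: card_ext)
      finally have "card Bad < card {t::bool list. length t = L}" using sumlt by (simp add: card_len)
      then have "\<not> {t::bool list. length t = L} \<subseteq> Bad"
        using card_mono[of Bad] Bad_def finite_ext insert.hyps(1) by (meson finite_UN_I leD)
      then obtain v where v: "length v = L" "v \<notin> Bad" by auto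
      define c' where "c' = c(x := v)"
      have pc: "prefix_code (insert x S) c'"
        unfolding prefix_code_def
      proof (intro ballI impI)
        fix a b assume ab: "a \<in> insert x S" "b \<in> insert x S" "a \<noteq> b"
        show "\<not> prefix (c' a) (c' b)"
        proof (cases "a = x")
          case True
          then have bS: "b \<in> S" "b \<noteq> x" using ab by auto
          show ?thesis
          proof
            assume "prefix (c' a) (c' b)"
            then have p: "prefix v (c b)" using True bS c'_def by simp
            have "length (c b) \<le> L" using c(2) lyL bS by simp
            then have "v = c b" using p v(1) by (auto simp: prefix_def)
            then have "v \<in> ext L (c b)" using v(1) unfolding ext_def by simp
            then show False using v(2) bS Bad_def by blast
          qed
        next
          case False
          then have aS: "a \<in> S" using ab by auto
          show ?thesis
          proof (cases "b = x")
            case True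
            show ?thesis
            proof
              assume "prefix (c' a) (c' b)"
              then have "prefix (c a) v" using True False c'_def by simp
              then have "v \<in> ext L (c a)" using v(1) unfolding ext_def by simp
              then show False using v(2) aS Bad_def by blast
            qed
          next
            case False2: False
            then show ?thesis using c(1) aS ab False unfolding prefix_code_def c'_def by auto
          qed
        qed
      qed
      moreover have "\<forall>y\<in>insert x S. length (c' y) = l y"
        using c(2) v(1) L_def c'_def by auto
      ultimately show "\<exists>c. prefix_code (insert x S) c \<and> (\<forall>y\<in>insert x S. length (c y) = l y)" by blast
    qed
  qed
qed



lemma sum_upd:
  fixes g :: "'a \<Rightarrow> 'c \<Rightarrow> 'b::ab_group_add"
  assumes "finite S" "x \<in> S"
  shows "(\<Sum>y\<in>S. g y ((l(x:=v)) y)) = (\<Sum>y\<in>S. g y (l y)) - g x (l x) + g x v"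
proof -
  have 1: "(\<Sum>y\<in>S. g y ((l(x:=v)) y)) = g x ((l(x:=v)) x) + (\<Sum>y\<in>S-{x}. g y ((l(x:=v)) y))"
    by (rule sum.remove[OF assms])
  have 2: "(\<Sum>y\<in>S-{x}. g y ((l(x:=v)) y)) = (\<Sum>y\<in>S-{x}. g y (l y))"
    by (rule sum.cong) auto
  have 3: "(\<Sum>y\<in>S. g y (l y)) = g x (l x) + (\<Sum>y\<in>S-{x}. g y (l y))"
    by (rule sum.remove[OF assms])
  show ?thesis unfolding 1 2 3 by (simp add: algebra_simps)
qed

lemma fringe_le2:
  fixes w :: "'a \<Rightarrow> real"
  assumes fin: "finite S" and opt: "optimal_code w S c"
    and wb: "\<forall>x\<in>S. 1/4 < w x \<and> w x \<le> 1" and eS: "e \<in> S" and we: "w e = 1/2"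
  shows "Max ((\<lambda>x. length (c x)) ` S) - Min ((\<lambda>x. length (c x)) ` S) \<le> 2"
proof (rule ccontr)
  define l where "l = (\<lambda>x. length (c x))"
  define D where "D = Max (l ` S)"
  define m where "m = Min (l ` S)"
  assume "\<not> ?thesis"
  then have Dm: "m + 3 \<le> D" unfolding D_def m_def l_def by simp
  have Sne: "S \<noteq> {}" using eS by auto
  have bnd: "\<forall>y\<in>S. m \<le> l y \<and> l y \<le> D" unfolding D_def m_def using fin by auto
  have "D \<in> l ` S" unfolding D_def using fin Sne by (simp add: Max_in)
  then obtain z1 where z1: "z1 \<in> S" "l z1 = D" by auto
  have "m \<in> l ` S" unfolding m_def using fin Sne by (simp add: Min_in)
  then obtain x where x: "x \<in> S" "l x = m" by auto
  have pc: "prefix_code S c" using opt unfolding optimal_code_def by simp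
  have KSn: "(\<Sum>y\<in>S. (2::nat)^(D - l y)) \<le> 2^D"
    using kraft1[OF fin pc, of D] bnd unfolding l_def by simp
  have KS: "(\<Sum>y\<in>S. (2::int)^(D - l y)) \<le> 2^D"
  proof -
    have "(\<Sum>y\<in>S. (2::int)^(D - l y)) = int (\<Sum>y\<in>S. (2::nat)^(D - l y))" by simp
    also have "\<dots> \<le> int (2^D)" using KSn by linarith
    finally show ?thesis by simp
  qed
  have improve: "\<not> (\<Sum>y\<in>S. w y * real (l' y)) < (\<Sum>y\<in>S. w y * real (l y))"
    if le: "\<forall>y\<in>S. l' y \<le> D" and ks: "(\<Sum>y\<in>S. (2::int)^(D - l' y)) \<le> 2^D" for l'
  proof -
    have "int (\<Sum>y\<in>S. (2::nat)^(D - l' y)) \<le> int (2^D)" using ks by simp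
    then have "(\<Sum>y\<in>S. (2::nat)^(D - l' y)) \<le> 2^D" by (simp only: of_nat_le_iff)
    then obtain c' where c': "prefix_code S c'" "\<forall>y\<in>S. length (c' y) = l' y"
      using kraft2[OF fin, of l' D] le by auto
    have "code_cost w S c \<le> code_cost w S c'" using opt c'(1) unfolding optimal_code_def by simp
    moreover have "code_cost w S c' = (\<Sum>y\<in>S. w y * real (l' y))"
      unfolding code_cost_def using c'(2) by (intro sum.cong) auto
    moreover have "code_cost w S c = (\<Sum>y\<in>S. w y * real (l y))"
      unfolding code_cost_def l_def by simp
    ultimately show ?thesis by simp
  qed
  have D1: "1 \<le> D" using Dm by simp
  obtain z2 where z2: "z2 \<in> S" "z2 \<noteq> z1" "l z2 = D"
  proof -
    have "\<exists>z2\<in>S. z2 \<noteq> z1 \<and> l z2 = D"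
    proof (rule ccontr)
      assume nz: "\<not> ?thesis"
      have lt: "\<forall>y\<in>S-{z1}. l y < D" using nz bnd by force
      have ev: "2 dvd (\<Sum>y\<in>S-{z1}. (2::int)^(D - l y))"
        by (rule dvd_sum) (use lt in auto)
      have "(\<Sum>y\<in>S. (2::int)^(D - l y)) = 2^(D - l z1) + (\<Sum>y\<in>S-{z1}. (2::int)^(D - l y))"
        using sum.remove[OF fin z1(1)] by simp
      then have eq: "(\<Sum>y\<in>S. (2::int)^(D - l y)) = 1 + (\<Sum>y\<in>S-{z1}. (2::int)^(D - l y))"
        using z1 by simp
      have "(\<Sum>y\<in>S. (2::int)^(D - l y)) \<noteq> 2^D"
      proof
        assume h: "(\<Sum>y\<in>S. (2::int)^(D - l y)) = 2^D"
        have "2 dvd (2::int)^D" using D1 by simp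
        then have "2 dvd (1::int) + (\<Sum>y\<in>S-{z1}. (2::int)^(D - l y))" using h eq by simp
        then show False using ev by presburger
      qed
      then have KS1: "(\<Sum>y\<in>S. (2::int)^(D - l y)) \<le> 2^D - 1" using KS by simp
      let ?l' = "l(z1 := D - 1)"
      have "\<forall>y\<in>S. ?l' y \<le> D" using bnd by auto
      moreover have "(\<Sum>y\<in>S. (2::int)^(D - ?l' y)) \<le> 2^D"
        using sum_upd[OF fin z1(1), of "\<lambda>y t. (2::int)^(D - t)" l "D - 1"] KS1 z1 D1 by simp
      moreover have wz: "0 < w z1" using wb z1 by force
      moreover have "(\<Sum>y\<in>S. w y * real (?l' y)) < (\<Sum>y\<in>S. w y * real (l y))"
        using sum_upd[OF fin z1(1), of "\<lambda>y t. w y * real t" l "D - 1"] z1 D1 wz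
        by (simp add: of_nat_diff algebra_simps)
      ultimately show False using improve by blast
    qed
    then show ?thesis using that by blast
  qed
  define d where "d = l e"
  have dD: "d \<le> D" "m \<le> d" using bnd eS d_def by auto
  have w0: "\<And>y. y \<in> S \<Longrightarrow> 1/4 < w y \<and> w y \<le> 1" using wb by blast
  show False
  proof (cases "d + 2 \<le> D")
    case True
    have ne: "e \<noteq> z1" "e \<noteq> z2" using True z1 z2 d_def by auto
    define j where "j = D - d - 1"
    have j: "D - d = Suc j" "D - Suc d = j" "1 \<le> j" using True j_def by auto
    let ?l' = "l(e := d + 1, z1 := D - 1, z2 := D - 1)"
    have "\<forall>y\<in>S. ?l' y \<le> D" using bnd True by auto
    moreover have "(\<Sum>y\<in>S. (2::int)^(D - ?l' y)) \<le> 2^D"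
    proof -
      have "(\<Sum>y\<in>S. (2::int)^(D - ?l' y)) = (\<Sum>y\<in>S. (2::int)^(D - l y)) - 2^(Suc j) + 2^j + 2"
        apply (subst sum_upd[OF fin z2(1), of "\<lambda>y t. (2::int)^(D - t)"])
        apply (subst sum_upd[OF fin z1(1), of "\<lambda>y t. (2::int)^(D - t)"])
        apply (subst sum_upd[OF fin eS, of "\<lambda>y t. (2::int)^(D - t)"])
        using z1 z2 ne d_def[symmetric] j D1 by simp
      moreover have "(2::int) \<le> 2^j" using j(3) by (metis power_increasing power_one_right zero_le_numeral
            one_le_numeral)
      ultimately show ?thesis using KS by simp
    qed
    moreover have "(\<Sum>y\<in>S. w y * real (?l' y)) < (\<Sum>y\<in>S. w y * real (l y))"
    proof -
      have "(\<Sum>y\<in>S. w y * real (?l' y)) = (\<Sum>y\<in>S. w y * real (l y)) + w e - w z1 - w z2"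
        apply (subst sum_upd[OF fin z2(1), of "\<lambda>y t. w y * real t"])
        apply (subst sum_upd[OF fin z1(1), of "\<lambda>y t. w y * real t"])
        apply (subst sum_upd[OF fin eS, of "\<lambda>y t. w y * real t"])
        using z1 z2 ne d_def[symmetric] D1 True by (simp add: of_nat_diff algebra_simps)
      then show ?thesis using w0[OF z1(1)] w0[OF z2(1)] we by simp
    qed
    ultimately show False using improve by blast
  next
    case False
    define j where "j = D - m - 1"
    have j: "D - m = Suc j" "D - Suc m = j" "2 \<le> j" using Dm j_def by auto
    have p4: "(4::int) \<le> 2^j"
      using power_increasing[OF j(3), of "2::int"] by simp
    have xe: "x \<noteq> e" using x d_def False Dm by auto
    show False
    proof (cases "d + 1 = D")
      case True
      have dd1: "D - d = 1" using True by simp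
      have ne: "e \<noteq> z1" "e \<noteq> z2" "x \<noteq> z1" "x \<noteq> z2" using True z1 z2 d_def x Dm by auto
      let ?l' = "l(x := m + 1, e := D - 2, z1 := D - 1, z2 := D - 1)"
      have "\<forall>y\<in>S. ?l' y \<le> D" using bnd Dm by auto
      moreover have "(\<Sum>y\<in>S. (2::int)^(D - ?l' y)) \<le> 2^D"
      proof -
        have "(\<Sum>y\<in>S. (2::int)^(D - ?l' y)) = (\<Sum>y\<in>S. (2::int)^(D - l y)) - 2^(Suc j) + 2^j + 4"
          apply (subst sum_upd[OF fin z2(1), of "\<lambda>y t. (2::int)^(D - t)"])
          apply (subst sum_upd[OF fin z1(1), of "\<lambda>y t. (2::int)^(D - t)"])
          apply (subst sum_upd[OF fin eS, of "\<lambda>y t. (2::int)^(D - t)"])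
          apply (subst sum_upd[OF fin x(1), of "\<lambda>y t. (2::int)^(D - t)"])
          using x z1 z2 ne xe d_def[symmetric] j D1 dd1 Dm by (simp add: numeral_eq_Suc)
        then show ?thesis using KS p4 by simp
      qed
      moreover have "(\<Sum>y\<in>S. w y * real (?l' y)) < (\<Sum>y\<in>S. w y * real (l y))"
      proof -
        have "(\<Sum>y\<in>S. w y * real (?l' y)) = (\<Sum>y\<in>S. w y * real (l y)) + w x - w e - w z1 - w z2"
          apply (subst sum_upd[OF fin z2(1), of "\<lambda>y t. w y * real t"])
          apply (subst sum_upd[OF fin z1(1), of "\<lambda>y t. w y * real t"])
          apply (subst sum_upd[OF fin eS, of "\<lambda>y t. w y * real t"])
          apply (subst sum_upd[OF fin x(1), of "\<lambda>y t. w y * real t"])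
          using x z1 z2 ne xe d_def[symmetric] D1 True[symmetric] Dm by (simp add: of_nat_diff algebra_simps)
        then show ?thesis using w0[OF z1(1)] w0[OF z2(1)] w0[OF x(1)] we by simp
      qed
      ultimately show False using improve by blast
    next
      case False2: False
      have dD2: "d = D" using False False2 dD by auto
      obtain z where z: "z \<in> S" "l z = D" "z \<noteq> e"
        using z1 z2 by (metis)
      have ne: "x \<noteq> z" using z x Dm by auto
      let ?l' = "l(x := m + 1, e := D - 2, z := D - 1)"
      have "\<forall>y\<in>S. ?l' y \<le> D" using bnd Dm by auto
      moreover have "(\<Sum>y\<in>S. (2::int)^(D - ?l' y)) \<le> 2^D"
      proof -
        have "(\<Sum>y\<in>S. (2::int)^(D - ?l' y)) = (\<Sum>y\<in>S. (2::int)^(D - l y)) - 2^(Suc j) + 2^j + 4"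
          apply (subst sum_upd[OF fin z(1), of "\<lambda>y t. (2::int)^(D - t)"])
          apply (subst sum_upd[OF fin eS, of "\<lambda>y t. (2::int)^(D - t)"])
          apply (subst sum_upd[OF fin x(1), of "\<lambda>y t. (2::int)^(D - t)"])
          using x z ne xe d_def[symmetric] j D1 dD2 Dm by (simp add: numeral_eq_Suc)
        then show ?thesis using KS p4 by simp
      qed
      moreover have "(\<Sum>y\<in>S. w y * real (?l' y)) < (\<Sum>y\<in>S. w y * real (l y))"
      proof -
        have "(\<Sum>y\<in>S. w y * real (?l' y)) = (\<Sum>y\<in>S. w y * real (l y)) + w x - 2 * w e - w z"
          apply (subst sum_upd[OF fin z(1), of "\<lambda>y t. w y * real t"])
          apply (subst sum_upd[OF fin eS, of "\<lambda>y t. w y * real t"])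
          apply (subst sum_upd[OF fin x(1), of "\<lambda>y t. w y * real t"])
          using x z ne xe d_def[symmetric] D1 dD2 Dm by (simp add: of_nat_diff algebra_simps)
        then show ?thesis using w0[OF z(1)] w0[OF x(1)] we by simp
      qed
      ultimately show False using improve by blast
    qed
  qed
qed



lemma opt_exists:
  fixes w :: "'a \<Rightarrow> real"
  assumes fin: "finite S" and wpos: "\<forall>x\<in>S. 0 < w x"
  shows "\<exists>c. optimal_code w S c"
proof (cases "S = {}")
  case True
  then show ?thesis by (simp add: optimal_code_def prefix_code_def code_cost_def)
next
  case False
  define n where "n = card S"
  have "(\<Sum>x\<in>S. (2::nat)^(n - n)) \<le> 2^n" using n_def by (simp add: less_imp_le)
  then obtain c0 where c0: "prefix_code S c0" "\<forall>x\<in>S. length (c0 x) = n"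
    using kraft2[OF fin, of "\<lambda>_. n" n] by auto
  define wm where "wm = Min (w ` S)"
  have wm: "0 < wm" "\<forall>x\<in>S. wm \<le> w x" unfolding wm_def using fin False wpos by auto
  define C0 where "C0 = code_cost w S c0"
  have C0: "0 \<le> C0" unfolding C0_def code_cost_def using wpos by (auto intro!: sum_nonneg)
  define B where "B = max n (nat \<lceil>C0 / wm\<rceil>)"
  have B: "C0 \<le> wm * real B"
  proof -
    have "C0 / wm \<le> real (nat \<lceil>C0 / wm\<rceil>)" by linarith
    also have "\<dots> \<le> real B" unfolding B_def by simp
    finally show ?thesis using wm(1) by (simp add: field_simps)
  qed
  define P where "P = {c \<in> PiE S (\<lambda>_. {u::bool list. length u \<le> B}). prefix_code S c}"
  have fl: "finite {u::bool list. length u \<le> B}"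
    using finite_lists_length_le[of "UNIV::bool set" B] by simp
  have finP: "finite P" unfolding P_def
    by (rule finite_subset[OF _ finite_PiE[OF fin, of "\<lambda>_. {u::bool list. length u \<le> B}"]]) (use fl in auto)
  have rc: "prefix_code S (restrict c S) \<longleftrightarrow> prefix_code S c" for c
    unfolding prefix_code_def by auto
  have rcost: "code_cost w S (restrict c S) = code_cost w S c" for c
    unfolding code_cost_def by (rule sum.cong) auto
  have c0P: "restrict c0 S \<in> P" unfolding P_def using c0 rc B_def by auto
  obtain cm where cm: "cm \<in> P" "\<forall>c\<in>P. code_cost w S cm \<le> code_cost w S c"
  proof -
    obtain v where v: "v \<in> code_cost w S ` P" "\<not> (\<exists>u\<in>code_cost w S ` P. u < v)"
      using ex_min_if_finite[of "code_cost w S ` P"] finP c0P by blast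
    then obtain cm where "cm \<in> P" "v = code_cost w S cm" by auto
    then show ?thesis using that v by (meson image_eqI not_le)
  qed
  have "optimal_code w S cm"
    unfolding optimal_code_def
  proof (intro conjI allI impI)
    show "prefix_code S cm" using cm(1) P_def by simp
    fix c' assume pc': "prefix_code S c'"
    show "code_cost w S cm \<le> code_cost w S c'"
    proof (cases "\<forall>x\<in>S. length (c' x) \<le> B")
      case True
      then have "restrict c' S \<in> P" unfolding P_def using rc pc' by auto
      then show ?thesis using cm(2) rcost by metis
    next
      case False
      then obtain x where x: "x \<in> S" "B < length (c' x)" by auto
      have "code_cost w S cm \<le> C0" using cm(2) c0P rcost C0_def by metis
      also have "\<dots> < wm * real (length (c' x))"
        using B x(2) wm(1) by (smt (verit) mult_strict_left_mono of_nat_less_iff)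
      also have "\<dots> \<le> w x * real (length (c' x))" using wm(2) x(1) by (simp add: mult_right_mono)
      also have "\<dots> \<le> code_cost w S c'" unfolding code_cost_def
        using x(1) fin wpos by (intro member_le_sum) auto
      finally show ?thesis by simp
    qed
  qed
  then show ?thesis by blast
qed



theorem lemma5:
  fixes k :: nat and q :: real and w :: "nat \<times> nat \<Rightarrow> real"
  assumes "1 \<le> k"
  defines "q \<equiv> 2 powr (- 1 / real k)"
      and "w \<equiv> (\<lambda>(i, j). q ^ (i + j))"
  shows "alpha_uniform 4 w ({0..<k} \<times> {0..<k}) \<and>
         (\<exists>T. optimal_code w ({0..<k} \<times> {0..<k}) T \<and>
              fringe_thickness ({0..<k} \<times> {0..<k}) T \<le> 2)"
proof -
  define S where "S = {0..<k} \<times> {0..<k}"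
  have fin: "finite S" unfolding S_def by simp
  have Sne: "S \<noteq> {}" unfolding S_def using assms(1) by auto
  have q0: "0 < q" unfolding q_def by simp
  have q1: "q < 1" unfolding q_def using assms(1) by (simp add: powr_less_one)
  have qk: "q ^ k = 1/2"
  proof -
    have "q ^ k = q powr real k" using q0 by (simp add: powr_realpow)
    also have "\<dots> = 2 powr (- 1 / real k * real k)" unfolding q_def by (simp add: powr_powr)
    also have "\<dots> = 2 powr (-1)" using assms(1) by simp
    finally show ?thesis by (simp add: powr_minus)
  qed
  have q2k: "q ^ (2*k) = 1/4" by (simp add: mult.commute qk power_mult power2_eq_square)
  have wb: "\<forall>x\<in>S. 1/4 < w x \<and> w x \<le> 1"
  proof
    fix x assume "x \<in> S"
    then obtain i j where x: "x = (i,j)" "i < k" "j < k" unfolding S_def by auto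
    have "q ^ (2*k) < q ^ (i+j)" using x q0 q1 by (intro power_strict_decreasing) auto
    moreover have "q ^ (i+j) \<le> 1" using q0 q1 by (simp add: power_le_one)
    ultimately show "1/4 < w x \<and> w x \<le> 1" using q2k x unfolding w_def by simp
  qed
  have au: "alpha_uniform 4 w S"
    unfolding alpha_uniform_def
  proof (intro conjI)
    show "finite S" "S \<noteq> {}" by (fact fin) (fact Sne)
    show "\<forall>x\<in>S. 0 < w x" using wb by force
    have "Max (w ` S) \<in> w ` S" using fin Sne by simp
    then have mx: "Max (w ` S) \<le> 1" using wb by auto
    have "Min (w ` S) \<in> w ` S" using fin Sne by simp
    then have mn: "1/4 < Min (w ` S)" using wb by auto
    show "Max (w ` S) / Min (w ` S) \<le> 4"
      using mx mn by (simp add: divide_le_eq)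
  qed simp
  obtain T where T: "optimal_code w S T"
    using opt_exists[OF fin, of w] wb by force
  have "fringe_thickness S T \<le> 2"
  proof (cases "k = 1")
    case True
    then have "S = {(0,0)}" unfolding S_def by auto
    then show ?thesis unfolding fringe_thickness_def by simp
  next
    case False
    define e where "e = (1::nat, k - 1)"
    have eS: "e \<in> S" unfolding e_def S_def using False assms(1) by auto
    obtain k' where k': "k = Suc k'" using assms(1) by (cases k) auto
    have we: "w e = 1/2" unfolding e_def w_def using qk k' by simp
    show ?thesis unfolding fringe_thickness_def using fringe_le2[OF fin T wb eS we] .
  qed
  then show ?thesis using au T S_def by blast
qed

end
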